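(* Let $R>0$ and let $s: I\to\mathbb{R}^n$ be an arc-length parametrized curve defined on an open interval $I\subseteq\mathbb{R}$. Suppose $s$ is continuous and $R$-monotone, i.e. for every closed ball $B\subseteq\mathbb{R}^n$ of radius at most $R$, the inverse image $s^{-1}(B)$ is a connected subset of $I$. Then $s$ is differentiable at almost every point of $I$.
   Context: A closed ball is a set $\{x\in\mathbb{R}^n:\|x-a\|\le \rho\}$ with center $a$ and radius $\rho$. For $R>0$, an arc-length parametrized curve $s$ is called $R$-monotone if the inverse image under $s$ of every closed ball of radius at most $R$ is connected. *)

theory Defs
  imports "HOL-Analysis.Analysis"
begin

definition polygon_lengths :: "(real \<Rightarrow> 'a::real_normed_vector) \<Rightarrow> real \<Rightarrow> real \<Rightarrow> real set" where
  "polygon_lengths s a b =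
     {(\<Sum>i<n. norm (s (t (Suc i)) - s (t i))) | n t.
        t 0 = a \<and> t n = b \<and> (\<forall>i<n. t i \<le> t (Suc i))}"

definition has_curve_length :: "(real \<Rightarrow> 'a::real_normed_vector) \<Rightarrow> real \<Rightarrow> real \<Rightarrow> real \<Rightarrow> bool" where
  "has_curve_length s a b L \<longleftrightarrow> bdd_above (polygon_lengths s a b) \<and> Sup (polygon_lengths s a b) = L"

definition arc_length_parametrized :: "(real \<Rightarrow> 'a::real_normed_vector) \<Rightarrow> real set \<Rightarrow> bool" where
  "arc_length_parametrized s I \<longleftrightarrow> (\<forall>a\<in>I. \<forall>b\<in>I. a \<le> b \<longrightarrow> has_curve_length s a b (b - a))"

definition R_monotone :: "real \<Rightarrow> (real \<Rightarrow> 'a::euclidean_space) \<Rightarrow> real set \<Rightarrow> bool" where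
  "R_monotone R s I \<longleftrightarrow>
     (\<forall>c \<rho>. 0 < \<rho> \<and> \<rho> \<le> R \<longrightarrow> connected {t \<in> I. s t \<in> cball c \<rho>})"

end

theory Submission
  imports Defs
begin

lemma cball_mid: "cball ((u+v)/2) ((v-u)/2) = {u..v::real}"
  by (simp add: cball_eq_atLeastAtMost field_simps)

lemma negl_countable: "countable (A::'a::euclidean_space set) \<Longrightarrow> negligible A"
proof -
  assume "countable A"
  then have "negligible (\<Union>((\<lambda>x. {x}) ` A))" by (intro negligible_countable_Union) auto
  then show ?thesis by simp
qed

lemma vitali_intervals:
  fixes S U :: "real set" and P :: "real \<Rightarrow> real \<Rightarrow> bool"
  assumes cov: "\<And>x d. x \<in> S \<Longrightarrow> d > 0 \<Longrightarrow> \<exists>u v. u < v \<and> v - u < d \<and> x \<in> {u..v} \<and> {u..v} \<subseteq> U \<and> P u v"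
  obtains C where "countable C" "\<And>i. i \<in> C \<Longrightarrow> fst i < snd i \<and> {fst i..snd i} \<subseteq> U \<and> P (fst i) (snd i)"
     "pairwise (\<lambda>i j. disjnt {fst i..snd i} {fst j..snd j}) C"
     "negligible (S - (\<Union>i\<in>C. {fst i<..<snd i}))"
proof -
  define K where "K = {i. fst i < snd i \<and> {fst i..snd i} \<subseteq> U \<and> P (fst i) (snd i)}"
  define ac where "ac = (\<lambda>i::real\<times>real. (fst i + snd i)/2)"
  define rr where "rr = (\<lambda>i::real\<times>real. (snd i - fst i)/2)"
  have cb: "cball (ac i) (rr i) = {fst i..snd i}" for i
    unfolding ac_def rr_def by (rule cball_mid)
  obtain C where C: "countable C" "C \<subseteq> K"
     "pairwise (\<lambda>i j. disjnt (cball (ac i) (rr i)) (cball (ac j) (rr j))) C"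
     "negligible(S - (\<Union>i \<in> C. cball (ac i) (rr i)))"
  proof (rule Vitali_covering_theorem_cballs[of K rr S ac])
    show "0 < rr i" if "i \<in> K" for i using that by (auto simp: K_def rr_def)
    show "\<exists>i. i \<in> K \<and> x \<in> cball (ac i) (rr i) \<and> rr i < d" if xd: "x \<in> S" "0 < d" for x d
    proof -
      obtain u v where "u < v \<and> v - u < d \<and> x \<in> {u..v} \<and> {u..v} \<subseteq> U \<and> P u v"
        using cov[OF xd] by blast
      moreover have "x \<in> cball (ac (u,v)) (rr (u,v))"
        using calculation by (simp only: cb) simp
      ultimately show ?thesis
        by (intro exI[of _ "(u,v)"]) (auto simp: K_def rr_def)
    qed
  qed blast
  show ?thesis
  proof
    show "countable C" by fact
    show "\<And>i. i \<in> C \<Longrightarrow> fst i < snd i \<and> {fst i..snd i} \<subseteq> U \<and> P (fst i) (snd i)"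
      using C(2) by (auto simp: K_def)
    show "pairwise (\<lambda>i j. disjnt {fst i..snd i} {fst j..snd j}) C"
      using C(3) by (simp add: cb)
    have "negligible ((fst ` C) \<union> (snd ` C))"
      using C(1) by (intro negl_countable) auto
    then have "negligible ((S - (\<Union>i \<in> C. cball (ac i) (rr i))) \<union> ((fst ` C) \<union> (snd ` C)))"
      using C(4) by (rule negligible_Un[rotated])
    then show "negligible (S - (\<Union>i\<in>C. {fst i<..<snd i}))"
      by (rule negligible_subset) (force simp: cb)
  qed
qed

lemma frequently_at_real:
  fixes x :: real
  assumes "frequently R (at x)" "e > 0"
  shows "\<exists>y. y \<noteq> x \<and> \<bar>y - x\<bar> < e \<and> R y"
proof (rule ccontr)
  assume "\<not> ?thesis"
  then have "eventually (\<lambda>y. \<not> R y) (at x)"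
    unfolding eventually_at using \<open>e > 0\<close> by (auto simp: dist_real_def)
  then show False using assms(1) by (simp add: frequently_def)
qed

locale incr =
  fixes h :: "real \<Rightarrow> real" and a b :: real
  assumes hb: "\<And>x y. a < x \<Longrightarrow> x < y \<Longrightarrow> y < b \<Longrightarrow> y - x \<le> h y - h x \<and> h y - h x \<le> 3*(y-x)"
begin

lemma mono_h: "a < x \<Longrightarrow> x \<le> y \<Longrightarrow> y < b \<Longrightarrow> h x \<le> h y"
  using hb[of x y] by (cases "x = y") auto

lemma strict_h: "a < x \<Longrightarrow> x < y \<Longrightarrow> y < b \<Longrightarrow> h x < h y"
  using hb[of x y] by auto

lemma lip_h: "a < x \<Longrightarrow> x < b \<Longrightarrow> a < y \<Longrightarrow> y < b \<Longrightarrow> \<bar>h y - h x\<bar> \<le> 3 * \<bar>y - x\<bar>"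
  using hb[of x y] hb[of y x] by (cases x y rule: linorder_cases) auto

lemma cont_h: "a < u \<Longrightarrow> v < b \<Longrightarrow> continuous_on {u..v} h"
  unfolding continuous_on_iff
proof (intro ballI allI impI)
  fix x e assume "a < u" "v < b" "x \<in> {u..v}" "(0::real) < e"
  show "\<exists>d>0. \<forall>x'\<in>{u..v}. dist x' x < d \<longrightarrow> dist (h x') (h x) < e"
  proof (intro exI[of _ "e/3"] conjI ballI impI)
    fix x' assume "x' \<in> {u..v}" "dist x' x < e / 3"
    then have "\<bar>h x' - h x\<bar> \<le> 3 * \<bar>x' - x\<bar>"
      using \<open>a < u\<close> \<open>v < b\<close> \<open>x \<in> {u..v}\<close> by (intro lip_h) auto
    then show "dist (h x') (h x) < e" using \<open>dist x' x < e / 3\<close> by (simp add: dist_real_def)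
  qed (use \<open>0 < e\<close> in auto)
qed

lemma img_h: "a < u \<Longrightarrow> u \<le> v \<Longrightarrow> v < b \<Longrightarrow> h ` {u..v} = {h u..h v}"
proof
  assume "a < u" "u \<le> v" "v < b"
  then show "h ` {u..v} \<subseteq> {h u..h v}" by (auto intro!: mono_h)
  show "{h u..h v} \<subseteq> h ` {u..v}"
  proof
    fix y assume "y \<in> {h u..h v}"
    then obtain x where "u \<le> x" "x \<le> v" "h x = y"
      using IVT'[of h u y v] cont_h \<open>a < u\<close> \<open>u \<le> v\<close> \<open>v < b\<close> by auto
    then show "y \<in> h ` {u..v}" by auto
  qed
qed

lemma inj_h: "inj_on h {a<..<b}"
proof (rule inj_onI)
  fix x y assume "x \<in> {a<..<b}" "y \<in> {a<..<b}" "h x = h y"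
  then show "x = y" using strict_h[of x y] strict_h[of y x] by (cases x y rule: linorder_cases) auto
qed

lemma quot_sym: "y \<noteq> (x::real) \<Longrightarrow> (h y - h x)/(y - x) = (h (max x y) - h (min x y))/(max x y - min x y)"
proof (cases "x < y")
  case False
  assume "y \<noteq> x"
  then have "(h y - h x)/(y - x) = (h x - h y)/(x - y)"
    using minus_divide_divide[of "h x - h y" "x - y"] by simp
  then show ?thesis using False by (simp add: min_def max_def)
qed (auto simp: min_def max_def)

lemma interval_from_freq:
  fixes x :: real and U :: "real set"
  assumes "open U" "x \<in> U" "frequently R (at x)" "d > 0"
    and P: "\<And>y. R y \<Longrightarrow> y \<noteq> x \<Longrightarrow> P (min x y) (max x y)"
  shows "\<exists>u v. u < v \<and> v - u < d \<and> x \<in> {u..v} \<and> {u..v} \<subseteq> U \<and> P u v"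
proof -
  obtain e where e: "e > 0" "ball x e \<subseteq> U" using assms(1,2) open_contains_ball by blast
  obtain y where y: "y \<noteq> x" "\<bar>y - x\<bar> < min e d" "R y"
    using frequently_at_real[OF assms(3), of "min e d"] e assms(4) by auto
  have "{min x y..max x y} \<subseteq> ball x e"
  proof
    fix z assume "z \<in> {min x y..max x y}"
    then have "\<bar>z - x\<bar> \<le> \<bar>y - x\<bar>" by (cases "x \<le> y") (auto simp: min_def max_def)
    then show "z \<in> ball x e" using y(2) by (simp add: dist_real_def abs_minus_commute)
  qed
  then have D: "{min x y..max x y} \<subseteq> U" using e(2) by (rule subset_trans)
  have A: "min x y < max x y" using y(1) by (cases "x \<le> y") (auto simp: min_def max_def)
  have yd: "\<bar>y - x\<bar> < d" using y(2) by simp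
  have B: "max x y - min x y < d" using yd by (cases "x \<le> y") (auto simp: min_def max_def)
  have C: "x \<in> {min x y..max x y}" by simp
  show ?thesis using A B C D P[OF y(3) y(1)] by blast
qed

lemma stepA:
  assumes U: "open U" "U \<subseteq> {a<..<b}" and p: "0 < p" and E: "E \<subseteq> U"
    and fr: "\<And>x. x \<in> E \<Longrightarrow> frequently (\<lambda>y. (h y - h x)/(y - x) < p) (at x)"
  obtains W H where "open W" "W \<subseteq> U" "negligible (E - W)" "H \<in> lmeasurable" "h ` W \<subseteq> H"
     "measure lebesgue H \<le> p * measure lebesgue U"
proof -
  have cov: "\<exists>u v. u < v \<and> v - u < d \<and> x \<in> {u..v} \<and> {u..v} \<subseteq> U \<and> h v - h u \<le> p * (v - u)"
    if "x \<in> E" "d > 0" for x d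
  proof (rule interval_from_freq[OF U(1) _ fr[OF that(1)] that(2)])
    show "x \<in> U" using that E by auto
    fix y assume "(h y - h x) / (y - x) < p" "y \<noteq> x"
    then have "(h (max x y) - h (min x y))/(max x y - min x y) < p" using quot_sym[of y x] by linarith
    moreover have "max x y - min x y > 0" using \<open>y \<noteq> x\<close> by (simp add: min_def max_def)
    ultimately show "h (max x y) - h (min x y) \<le> p * (max x y - min x y)"
      by (simp add: pos_divide_less_eq mult.commute)
  qed
  obtain C where C: "countable C"
     "\<And>i. i \<in> C \<Longrightarrow> fst i < snd i \<and> {fst i..snd i} \<subseteq> U \<and> h (snd i) - h (fst i) \<le> p * (snd i - fst i)"
     "pairwise (\<lambda>i j. disjnt {fst i..snd i} {fst j..snd j}) C"
     "negligible (E - (\<Union>i\<in>C. {fst i<..<snd i}))"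
    by (rule vitali_intervals[of E U "\<lambda>u v. h v - h u \<le> p * (v - u)", OF cov]) auto
  define W where "W = (\<Union>i\<in>C. {fst i<..<snd i})"
  define H where "H = (\<Union>i\<in>C. {h (fst i)..h (snd i)})"
  have ab: "a < fst i" "snd i < b" if "i \<in> C" for i
  proof -
    have "fst i \<in> {fst i..snd i}" "snd i \<in> {fst i..snd i}" using C(2)[OF that] by auto
    then have "fst i \<in> U" "snd i \<in> U" using C(2)[OF that] by blast+
    then show "a < fst i" "snd i < b" using U(2) by auto
  qed
  have Ulm: "U \<in> lmeasurable"
    using U by (intro lmeasurable_open) (auto intro: bounded_subset[of "{a<..<b}"])
  have bound: "measure lebesgue (\<Union>i\<in>C'. {h (fst i)..h (snd i)}) \<le> p * measure lebesgue U"
    if "C' \<subseteq> C" "finite C'" for C'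
  proof -
    have "measure lebesgue (\<Union>i\<in>C'. {h (fst i)..h (snd i)}) \<le> (\<Sum>i\<in>C'. measure lebesgue {h (fst i)..h (snd i)})"
      using that by (intro measure_UNION_le) auto
    also have "\<dots> = (\<Sum>i\<in>C'. h (snd i) - h (fst i))"
    proof (intro sum.cong refl)
      fix i assume "i \<in> C'"
      then have "i \<in> C" "fst i < snd i" using that C(2) by blast+
      then have "h (fst i) \<le> h (snd i)" using ab[of i] by (intro mono_h) auto
      then show "measure lebesgue {h (fst i)..h (snd i)} = h (snd i) - h (fst i)" by simp
    qed
    also have "\<dots> \<le> (\<Sum>i\<in>C'. p * (snd i - fst i))"
      using that C(2) by (intro sum_mono) auto
    also have "\<dots> = p * (\<Sum>i\<in>C'. snd i - fst i)"
      by (simp add: sum_distrib_left)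
    also have "(\<Sum>i\<in>C'. snd i - fst i) = (\<Sum>i\<in>C'. measure lebesgue {fst i..snd i})"
    proof (intro sum.cong refl)
      fix i assume "i \<in> C'"
      then have "fst i < snd i" using that C(2) by blast
      then show "snd i - fst i = measure lebesgue {fst i..snd i}" by simp
    qed
    also have "(\<Sum>i\<in>C'. measure lebesgue {fst i..snd i}) = measure lebesgue (\<Union>i\<in>C'. {fst i..snd i})"
    proof (rule measure_negligible_finite_Union_image[symmetric])
      show "pairwise (\<lambda>i j. negligible ({fst i..snd i} \<inter> {fst j..snd j})) C'"
        using pairwise_subset[OF C(3) that(1)] by (auto simp: pairwise_def disjnt_def)
    qed (use that in auto)
    also have "measure lebesgue (\<Union>i\<in>C'. {fst i..snd i}) \<le> measure lebesgue U"
      using that C(2) Ulm by (intro measure_mono_fmeasurable) auto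
    finally show ?thesis using p by (simp add: mult_left_mono)
  qed
  show ?thesis
  proof
    show "open W" unfolding W_def by auto
    show "W \<subseteq> U" unfolding W_def
    proof (intro UN_least)
      fix i assume "i \<in> C"
      then show "{fst i<..<snd i} \<subseteq> U" using C(2)[of i] by auto
    qed
    show "negligible (E - W)" unfolding W_def by (rule C(4))
    show "H \<in> lmeasurable" unfolding H_def
      by (rule fmeasurable_UN_bound[OF C(1) _ bound]) auto
    show "measure lebesgue H \<le> p * measure lebesgue U" unfolding H_def
      by (rule measure_UN_bound[OF C(1) _ bound]) auto
    show "h ` W \<subseteq> H"
    proof
      fix z assume "z \<in> h ` W"
      then obtain i y where "i \<in> C" "y \<in> {fst i<..<snd i}" "z = h y" unfolding W_def by auto
      then have "z \<in> {h (fst i)..h (snd i)}" using ab[of i] by (auto intro!: mono_h)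
      then show "z \<in> H" unfolding H_def using \<open>i \<in> C\<close> by auto
    qed
  qed
qed

lemma stepB:
  assumes W: "open W" "W \<subseteq> {a<..<b}" and q: "0 < q" and E: "E \<subseteq> W"
    and fr: "\<And>x. x \<in> E \<Longrightarrow> frequently (\<lambda>y. q < (h y - h x)/(y - x)) (at x)"
    and H: "H \<in> lmeasurable" "h ` W \<subseteq> H"
  obtains V where "open V" "V \<subseteq> W" "negligible (E - V)" "q * measure lebesgue V \<le> measure lebesgue H"
proof -
  have cov: "\<exists>u v. u < v \<and> v - u < d \<and> x \<in> {u..v} \<and> {u..v} \<subseteq> W \<and> q * (v - u) \<le> h v - h u"
    if "x \<in> E" "d > 0" for x d
  proof (rule interval_from_freq[OF W(1) _ fr[OF that(1)] that(2)])
    show "x \<in> W" using that E by auto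
    fix y assume "q < (h y - h x) / (y - x)" "y \<noteq> x"
    then have "q < (h (max x y) - h (min x y))/(max x y - min x y)" using quot_sym[of y x] by linarith
    moreover have "max x y - min x y > 0" using \<open>y \<noteq> x\<close> by (simp add: min_def max_def)
    ultimately show "q * (max x y - min x y) \<le> h (max x y) - h (min x y)"
      by (simp add: pos_less_divide_eq)
  qed
  obtain C where C: "countable C"
     "\<And>i. i \<in> C \<Longrightarrow> fst i < snd i \<and> {fst i..snd i} \<subseteq> W \<and> q * (snd i - fst i) \<le> h (snd i) - h (fst i)"
     "pairwise (\<lambda>i j. disjnt {fst i..snd i} {fst j..snd j}) C"
     "negligible (E - (\<Union>i\<in>C. {fst i<..<snd i}))"
    by (rule vitali_intervals[of E W "\<lambda>u v. q * (v - u) \<le> h v - h u", OF cov]) auto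
  define V where "V = (\<Union>i\<in>C. {fst i<..<snd i})"
  have ab: "a < fst i" "snd i < b" if "i \<in> C" for i
  proof -
    have "fst i \<in> {fst i..snd i}" "snd i \<in> {fst i..snd i}" using C(2)[OF that] by auto
    then have "fst i \<in> W" "snd i \<in> W" using C(2)[OF that] by blast+
    then show "a < fst i" "snd i < b" using W(2) by auto
  qed
  have img: "{h (fst i)..h (snd i)} = h ` {fst i..snd i}" if "i \<in> C" for i
    using img_h[of "fst i" "snd i"] ab[OF that] C(2)[OF that] by auto
  have sub: "{fst i..snd i} \<subseteq> {a<..<b}" if "i \<in> C" for i
    using ab[OF that] by auto
  have Hs: "h ` {fst i..snd i} \<subseteq> H" if "i \<in> C" for i
    using C(2)[OF that] H(2) by blast
  have bound: "measure lebesgue (\<Union>i\<in>C'. {fst i<..<snd i}) \<le> measure lebesgue H / q"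
    if "C' \<subseteq> C" "finite C'" for C'
  proof -
    have "measure lebesgue (\<Union>i\<in>C'. {fst i<..<snd i}) \<le> (\<Sum>i\<in>C'. measure lebesgue {fst i<..<snd i})"
      using that by (intro measure_UNION_le) auto
    also have "\<dots> = (\<Sum>i\<in>C'. snd i - fst i)"
    proof (intro sum.cong refl)
      fix i assume "i \<in> C'"
      then have "fst i < snd i" using that C(2) by blast
      then show "measure lebesgue {fst i<..<snd i} = snd i - fst i" by simp
    qed
    also have "\<dots> \<le> (\<Sum>i\<in>C'. (h (snd i) - h (fst i)) / q)"
    proof (intro sum_mono)
      fix i assume "i \<in> C'"
      then have "q * (snd i - fst i) \<le> h (snd i) - h (fst i)" using that C(2) by blast
      then show "snd i - fst i \<le> (h (snd i) - h (fst i)) / q" using q by (simp add: pos_le_divide_eq mult.commute)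
    qed
    also have "\<dots> = (\<Sum>i\<in>C'. h (snd i) - h (fst i)) / q"
      by (simp add: sum_divide_distrib)
    also have "(\<Sum>i\<in>C'. h (snd i) - h (fst i)) = (\<Sum>i\<in>C'. measure lebesgue {h (fst i)..h (snd i)})"
    proof (intro sum.cong refl)
      fix i assume "i \<in> C'"
      then have "i \<in> C" "fst i < snd i" using that C(2) by blast+
      then have "h (fst i) \<le> h (snd i)" using ab[of i] by (intro mono_h) auto
      then show "h (snd i) - h (fst i) = measure lebesgue {h (fst i)..h (snd i)}" by simp
    qed
    also have "(\<Sum>i\<in>C'. measure lebesgue {h (fst i)..h (snd i)}) = measure lebesgue (\<Union>i\<in>C'. {h (fst i)..h (snd i)})"
    proof (rule measure_negligible_finite_Union_image[symmetric])
      show "pairwise (\<lambda>i j. negligible ({h (fst i)..h (snd i)} \<inter> {h (fst j)..h (snd j)})) C'"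
        unfolding pairwise_def
      proof (intro ballI impI)
        fix i j assume ij: "i \<in> C'" "j \<in> C'" "i \<noteq> j"
        then have "i \<in> C" "j \<in> C" using that by auto
        have dj: "{fst i..snd i} \<inter> {fst j..snd j} = {}"
          using pairwise_subset[OF C(3) that(1)] ij by (auto simp: pairwise_def disjnt_def)
        have "{h (fst i)..h (snd i)} \<inter> {h (fst j)..h (snd j)} = h ` ({fst i..snd i} \<inter> {fst j..snd j})"
          using inj_on_image_Int[OF inj_h sub[OF \<open>i \<in> C\<close>] sub[OF \<open>j \<in> C\<close>]]
            img[OF \<open>i \<in> C\<close>] img[OF \<open>j \<in> C\<close>] by simp
        then show "negligible ({h (fst i)..h (snd i)} \<inter> {h (fst j)..h (snd j)})" using dj by simp
      qed
    qed (use that in auto)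
    also have "measure lebesgue (\<Union>i\<in>C'. {h (fst i)..h (snd i)}) \<le> measure lebesgue H"
    proof (intro measure_mono_fmeasurable H(1))
      show "(\<Union>i\<in>C'. {h (fst i)..h (snd i)}) \<subseteq> H"
        using that img Hs by blast
    qed (use that in auto)
    finally show ?thesis using q by (simp add: divide_right_mono)
  qed
  show ?thesis
  proof
    show "open V" unfolding V_def by auto
    show "V \<subseteq> W" unfolding V_def
    proof (intro UN_least)
      fix i assume "i \<in> C"
      then show "{fst i<..<snd i} \<subseteq> W" using C(2)[of i] by auto
    qed
    show "negligible (E - V)" unfolding V_def by (rule C(4))
    have "measure lebesgue V \<le> measure lebesgue H / q" unfolding V_def
      by (rule measure_UN_bound[OF C(1) _ bound]) auto
    then show "q * measure lebesgue V \<le> measure lebesgue H" using q by (simp add: pos_le_divide_eq mult.commute)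
  qed
qed

lemma E_negligible:
  assumes pq: "0 < p" "p < q"
  shows "negligible {x \<in> {a<..<b}. frequently (\<lambda>y. (h y - h x)/(y - x) < p) (at x) \<and>
                                    frequently (\<lambda>y. q < (h y - h x)/(y - x)) (at x)}" (is "negligible ?E")
proof (cases "a < b")
  case False
  then show ?thesis by simp
next
  case True
  define r where "r = p / q"
  have r: "0 < r" "r < 1" using pq by (auto simp: r_def)
  have q0: "0 < q" using pq by simp
  have step: "\<exists>V. open V \<and> V \<subseteq> {a<..<b} \<and> negligible (?E - V) \<and> measure lebesgue V \<le> r ^ n * (b - a)" for n
  proof (induction n)
    case 0
    have "?E - {a<..<b} = {}" by auto
    then show ?case using True by (intro exI[of _ "{a<..<b}"]) auto
  next
    case (Suc n)
    then obtain U where U: "open U" "U \<subseteq> {a<..<b}" "negligible (?E - U)" "measure lebesgue U \<le> r ^ n * (b - a)"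
      by blast
    obtain W H where WH: "open W" "W \<subseteq> U" "negligible ((?E \<inter> U) - W)" "H \<in> lmeasurable" "h ` W \<subseteq> H"
       "measure lebesgue H \<le> p * measure lebesgue U"
      by (rule stepA[OF U(1,2) pq(1), of "?E \<inter> U"]) auto
    have W2: "W \<subseteq> {a<..<b}" using WH(2) U(2) by blast
    obtain V where V: "open V" "V \<subseteq> W" "negligible ((?E \<inter> W) - V)" "q * measure lebesgue V \<le> measure lebesgue H"
      by (rule stepB[OF WH(1) W2 q0, of "?E \<inter> W" H, OF _ _ WH(4,5)]) auto
    have "?E - V \<subseteq> (?E - U) \<union> ((?E \<inter> U) - W) \<union> ((?E \<inter> W) - V)" by blast
    then have neg: "negligible (?E - V)"
      using U(3) WH(3) V(3) by (meson negligible_Un negligible_subset)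
    have "q * measure lebesgue V \<le> p * (r ^ n * (b - a))"
      using V(4) WH(6) U(4) pq(1) by (meson mult_left_mono order_trans less_imp_le)
    then have "measure lebesgue V \<le> (p * (r ^ n * (b - a))) / q"
      using q0 by (simp add: pos_le_divide_eq mult.commute)
    also have "\<dots> = r ^ Suc n * (b - a)" by (simp add: r_def)
    finally show ?case using V(1,2) WH(2) U(2) neg by (intro exI[of _ V]) auto
  qed
  show ?thesis
    unfolding negligible_outer
  proof (intro allI impI)
    fix e :: real assume "0 < e"
    then have "0 < e / (b - a)" using True by simp
    then obtain n where n: "r ^ n < e / (b - a)" using real_arch_pow_inv[OF _ r(2)] by blast
    obtain V where V: "open V" "V \<subseteq> {a<..<b}" "negligible (?E - V)" "measure lebesgue V \<le> r ^ n * (b - a)"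
      using step by blast
    have Vm: "V \<in> lmeasurable" using V by (intro lmeasurable_open) (auto intro: bounded_subset[of "{a<..<b}"])
    have Nm: "?E - V \<in> lmeasurable" using V(3) by (rule negligible_imp_measurable)
    have "measure lebesgue (V \<union> (?E - V)) \<le> measure lebesgue V + measure lebesgue (?E - V)"
      using Vm Nm by (intro measure_Un_le) auto
    also have "\<dots> = measure lebesgue V" using negligible_imp_measure0[OF V(3)] by simp
    also have "\<dots> < e" using V(4) n True by (simp add: pos_less_divide_eq)
    finally have "measure lebesgue (V \<union> (?E - V)) < e" .
    moreover have "V \<union> (?E - V) \<in> lmeasurable" using Vm Nm by (intro fmeasurable.Un)
    moreover have "?E \<subseteq> V \<union> (?E - V)" by blast
    ultimately show "\<exists>T. ?E \<subseteq> T \<and> T \<in> lmeasurable \<and> measure lebesgue T < e" by blast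
  qed
qed

lemma quot_bounds:
  assumes "a < x" "x < b" "a < y" "y < b" "y \<noteq> x"
  shows "1 \<le> (h y - h x)/(y - x) \<and> (h y - h x)/(y - x) \<le> 3"
proof -
  have eq: "(h y - h x)/(y - x) = (h (max x y) - h (min x y))/(max x y - min x y)"
    using quot_sym[OF assms(5)] .
  have pos: "max x y - min x y > 0" using assms(5) by (simp add: min_def max_def)
  have "max x y - min x y \<le> h (max x y) - h (min x y) \<and> h (max x y) - h (min x y) \<le> 3 * (max x y - min x y)"
    using hb[of "min x y" "max x y"] assms pos by (simp add: min_def max_def split: if_splits)
  then show ?thesis unfolding eq using pos by (simp add: pos_le_divide_eq pos_divide_le_eq)
qed

lemma diff_good:
  assumes x: "a < x" "x < b"
    and good: "\<And>p q. p \<in> \<rat> \<Longrightarrow> q \<in> \<rat> \<Longrightarrow> 0 < p \<Longrightarrow> p < q \<Longrightarrow>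
       \<not> (frequently (\<lambda>y. (h y - h x)/(y - x) < p) (at x) \<and> frequently (\<lambda>y. q < (h y - h x)/(y - x)) (at x))"
  shows "h differentiable (at x)"
proof -
  define Q where "Q = (\<lambda>y. (h y - h x)/(y - x))"
  have ev: "eventually (\<lambda>y. 1 \<le> Q y \<and> Q y \<le> 3) (at x)"
  proof -
    have "eventually (\<lambda>y. y \<in> {a<..<b} - {x}) (at x)"
      using x by (intro eventually_at_in_open) auto
    then show ?thesis
      by eventually_elim (use quot_bounds x in \<open>auto simp: Q_def\<close>)
  qed
  define S where "S = {r \<in> \<rat>. eventually (\<lambda>y. r \<le> Q y) (at x)}"
  define c where "c = Sup S"
  have one: "1 \<in> S" unfolding S_def using ev by (auto elim: eventually_mono)
  have bdd: "r \<le> 3" if "r \<in> S" for r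
  proof (rule ccontr)
    assume "\<not> r \<le> 3"
    have "eventually (\<lambda>y. r \<le> Q y) (at x)" using that by (simp add: S_def)
    then have "eventually (\<lambda>y. False) (at x)"
      using ev by eventually_elim (use \<open>\<not> r \<le> 3\<close> in auto)
    then show False by simp
  qed
  have bddS: "bdd_above S" using bdd by (auto simp: bdd_above_def)
  have c1: "1 \<le> c" unfolding c_def using one bddS by (rule cSup_upper)
  have "(Q \<longlongrightarrow> c) (at x)"
  proof (rule order_tendstoI)
    fix a' assume "a' < c"
    then obtain r where "r \<in> S" "a' < r" using less_cSup_iff[of S a'] one bddS unfolding c_def by auto
    then have "eventually (\<lambda>y. r \<le> Q y) (at x)" by (simp add: S_def)
    then show "eventually (\<lambda>y. a' < Q y) (at x)"
      by eventually_elim (use \<open>a' < r\<close> in auto)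
  next
    fix a' assume "c < a'"
    obtain p' where p': "p' \<in> \<rat>" "c < p'" "p' < a'" using Rats_dense_in_real[OF \<open>c < a'\<close>] by blast
    obtain q' where q': "q' \<in> \<rat>" "p' < q'" "q' < a'" using Rats_dense_in_real[OF \<open>p' < a'\<close>] by blast
    have "p' \<notin> S" using p'(2) cSup_upper[OF _ bddS, of p'] unfolding c_def by auto
    then have "\<not> eventually (\<lambda>y. p' \<le> Q y) (at x)" using p'(1) by (simp add: S_def)
    then have "frequently (\<lambda>y. Q y < p') (at x)"
      by (simp add: frequently_def not_less)
    then have "\<not> frequently (\<lambda>y. q' < Q y) (at x)"
      using good[OF p'(1) q'(1) _ q'(2)] p'(2) c1 unfolding Q_def by auto
    then have "eventually (\<lambda>y. Q y \<le> q') (at x)"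
      by (simp add: not_frequently not_less)
    then show "eventually (\<lambda>y. Q y < a') (at x)"
      by eventually_elim (use q'(3) in auto)
  qed
  then have "(h has_real_derivative c) (at x)"
    unfolding has_field_derivative_iff Q_def .
  then show ?thesis by (auto simp: has_field_derivative_def differentiable_def)
qed

lemma ae_diff_h: "negligible {x \<in> {a<..<b}. \<not> h differentiable (at x)}"
proof -
  define E where "E = (\<lambda>p q. {x \<in> {a<..<b}. frequently (\<lambda>y. (h y - h x)/(y - x) < p) (at x) \<and>
                                    frequently (\<lambda>y. q < (h y - h x)/(y - x)) (at x)})"
  define PQ where "PQ = {pq :: real \<times> real. fst pq \<in> \<rat> \<and> snd pq \<in> \<rat> \<and> 0 < fst pq \<and> fst pq < snd pq}"
  have cPQ: "countable PQ"
    by (rule countable_subset[of _ "\<rat> \<times> \<rat>"]) (auto simp: PQ_def countable_rat)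
  have "negligible (\<Union>((\<lambda>pq. E (fst pq) (snd pq)) ` PQ))"
  proof (rule negligible_countable_Union)
    show "countable ((\<lambda>pq. E (fst pq) (snd pq)) ` PQ)" using cPQ by simp
    show "negligible S" if "S \<in> (\<lambda>pq. E (fst pq) (snd pq)) ` PQ" for S
      using that E_negligible by (auto simp: PQ_def E_def)
  qed
  moreover have "{x \<in> {a<..<b}. \<not> h differentiable (at x)} \<subseteq> \<Union>((\<lambda>pq. E (fst pq) (snd pq)) ` PQ)"
  proof
    fix x assume x: "x \<in> {x \<in> {a<..<b}. \<not> h differentiable (at x)}"
    then obtain p q where "p \<in> \<rat>" "q \<in> \<rat>" "0 < p" "p < q"
      "frequently (\<lambda>y. (h y - h x)/(y - x) < p) (at x) \<and> frequently (\<lambda>y. q < (h y - h x)/(y - x)) (at x)"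
      using diff_good[of x] by auto
    then show "x \<in> \<Union>((\<lambda>pq. E (fst pq) (snd pq)) ` PQ)"
      using x by (auto simp: PQ_def E_def intro!: bexI[of _ "(p,q)"])
  qed
  ultimately show ?thesis by (rule negligible_subset)
qed

end

lemma lip_component_diff:
  fixes g :: "real \<Rightarrow> real"
  assumes lip: "\<And>x y. a < x \<Longrightarrow> x < y \<Longrightarrow> y < b \<Longrightarrow> \<bar>g y - g x\<bar> \<le> y - x"
  shows "negligible {x \<in> {a<..<b}. \<not> g differentiable (at x)}"
proof -
  define h where "h = (\<lambda>t. g t + 2 * t)"
  interpret incr h a b
  proof
    fix x y assume "a < x" "x < y" "y < b"
    then have "\<bar>g y - g x\<bar> \<le> y - x" by (rule lip)
    then show "y - x \<le> h y - h x \<and> h y - h x \<le> 3 * (y - x)"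
      by (simp add: h_def abs_le_iff)
  qed
  have "{x \<in> {a<..<b}. \<not> g differentiable (at x)} \<subseteq> {x \<in> {a<..<b}. \<not> h differentiable (at x)}"
  proof (clarify)
    fix x assume "h differentiable (at x)" "\<not> g differentiable (at x)"
    then have "(\<lambda>t. h t - 2 * t) differentiable (at x)" by (intro differentiable_diff) auto
    moreover have "(\<lambda>t. h t - 2 * t) = g" by (simp add: h_def)
    ultimately show False using \<open>\<not> g differentiable (at x)\<close> by simp
  qed
  then show ?thesis using ae_diff_h by (rule negligible_subset[rotated])
qed


lemma arc_lip:
  fixes s :: "real \<Rightarrow> 'a::real_normed_vector"
  assumes "arc_length_parametrized s I" "x \<in> I" "y \<in> I" "x \<le> y"
  shows "norm (s y - s x) \<le> y - x"
proof -
  have hc: "has_curve_length s x y (y - x)" using assms unfolding arc_length_parametrized_def by blast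
  define t where "t = (\<lambda>i::nat. if i = 0 then x else y)"
  have "norm (s y - s x) \<in> polygon_lengths s x y"
    unfolding polygon_lengths_def
    by (rule CollectI, rule exI[of _ "1::nat"], rule exI[of _ t]) (use assms(4) in \<open>auto simp: t_def\<close>)
  then have "norm (s y - s x) \<le> Sup (polygon_lengths s x y)"
    using hc unfolding has_curve_length_def by (intro cSup_upper) auto
  then show ?thesis using hc unfolding has_curve_length_def by simp
qed

lemma diff_from_components:
  fixes s :: "real \<Rightarrow> 'n::euclidean_space"
  assumes "\<And>k. k \<in> Basis \<Longrightarrow> (\<lambda>t. s t \<bullet> k) differentiable (at x)"
  shows "s differentiable (at x)"
proof -
  have "(\<lambda>t. \<Sum>k\<in>Basis. (s t \<bullet> k) *\<^sub>R k) differentiable (at x)"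
    using assms by (intro differentiable_sum) auto
  moreover have "(\<lambda>t. \<Sum>k\<in>Basis. (s t \<bullet> k) *\<^sub>R k) = s" by (simp add: euclidean_representation)
  ultimately show ?thesis by simp
qed

theorem mainTheorem1:
  fixes R :: real and s :: "real \<Rightarrow> 'n::euclidean_space" and I :: "real set"
  assumes "R > 0"
    and "open I" and "is_interval I"
    and "arc_length_parametrized s I"
    and "continuous_on I s"
    and "R_monotone R s I"
  shows "AE t in lborel. t \<in> I \<longrightarrow> s differentiable (at t)"
proof -
  define RR where "RR = {ab :: real \<times> real. fst ab \<in> \<rat> \<and> snd ab \<in> \<rat> \<and> {fst ab<..<snd ab} \<subseteq> I}"
  define Bad where "Bad = (\<lambda>(ab :: real \<times> real, k :: 'n). {x \<in> {fst ab<..<snd ab}. \<not> (\<lambda>t. s t \<bullet> k) differentiable (at x)})"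
  have cRR: "countable RR"
    by (rule countable_subset[of _ "\<rat> \<times> \<rat>"]) (auto simp: RR_def countable_rat)
  have negB: "negligible (\<Union>(Bad ` (RR \<times> Basis)))"
  proof (rule negligible_countable_Union)
    show "countable (Bad ` (RR \<times> Basis))" using cRR by (intro countable_image countable_SIGMA) (auto intro: countable_finite)
    show "negligible S" if Sin: "S \<in> Bad ` (RR \<times> Basis)" for S
    proof -
      obtain abk where "abk \<in> RR \<times> Basis" "S = Bad abk" using Sin by blast
      then obtain ab k where abk: "ab \<in> RR" "k \<in> Basis" "S = Bad (ab, k)" by (cases abk) blast
      have "negligible {x \<in> {fst ab<..<snd ab}. \<not> (\<lambda>t. s t \<bullet> k) differentiable (at x)}"
      proof (rule lip_component_diff)
        fix x y assume xy: "fst ab < x" "x < y" "y < snd ab"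
        then have "x \<in> I" "y \<in> I" using abk(1) by (auto simp: RR_def)
        then have "norm (s y - s x) \<le> y - x" using arc_lip[OF assms(4)] xy by auto
        moreover have "\<bar>s y \<bullet> k - s x \<bullet> k\<bar> \<le> norm (s y - s x)"
          using Basis_le_norm[OF abk(2), of "s y - s x"] by (simp add: inner_diff_left)
        ultimately show "\<bar>s y \<bullet> k - s x \<bullet> k\<bar> \<le> y - x" by linarith
      qed
      then show ?thesis using abk(3) by (simp add: Bad_def)
    qed
  qed
  have sub: "{x \<in> I. \<not> s differentiable (at x)} \<subseteq> \<Union>(Bad ` (RR \<times> Basis))"
  proof
    fix x assume "x \<in> {x \<in> I. \<not> s differentiable (at x)}"
    then have x: "x \<in> I" "\<not> s differentiable (at x)" by auto
    obtain e where e: "e > 0" "ball x e \<subseteq> I" using assms(2) x(1) open_contains_ball by blast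
    obtain a' where a': "a' \<in> \<rat>" "x - e < a'" "a' < x" using Rats_dense_in_real[of "x - e" x] e by auto
    obtain b' where b': "b' \<in> \<rat>" "x < b'" "b' < x + e" using Rats_dense_in_real[of x "x + e"] e by auto
    have "{a'<..<b'} \<subseteq> ball x e" using a' b' by (auto simp: dist_real_def)
    then have ab: "(a', b') \<in> RR" using a' b' e by (auto simp: RR_def)
    obtain k where k: "k \<in> Basis" "\<not> (\<lambda>t. s t \<bullet> k) differentiable (at x)"
      using diff_from_components[of s x] x(2) by blast
    have "x \<in> Bad ((a', b'), k)" using k a' b' by (simp add: Bad_def)
    then show "x \<in> \<Union>(Bad ` (RR \<times> Basis))" using ab k by blast
  qed
  then have "negligible {x \<in> I. \<not> s differentiable (at x)}" using negB by (rule negligible_subset[rotated])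
  then have "AE t in lebesgue. t \<notin> {x \<in> I. \<not> s differentiable (at x)}"
    by (intro AE_not_in) (simp add: negligible_iff_null_sets)
  then have "AE t in lebesgue. t \<in> I \<longrightarrow> s differentiable (at t)" by (rule AE_mp) auto
  then show ?thesis by (simp add: AE_completion_iff)
qed

end
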